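(* Let $G=(V,E)$ be a finite simple graph, let $A$ be a nonzero commutative ring with unity, and let $R=A[V]$ be the polynomial ring over $A$ whose variables are the vertices of $G$. Then the open neighborhood ideal $\mathcal{N}(G)=(X_{N(v)} \mid v\in V)R$ satisfies $$\mathcal{N}(G)=\bigcap_{D}(D)R=\bigcap_{D\ \mathrm{minimal}}(D)R,$$ where the first intersection runs over all total dominating sets $D$ of $G$, and the second over all minimal total dominating sets of $G$. Moreover, the second decomposition is irredundant.
   Context: For $v\in V$, $N(v)=\{u\in V: uv\in E\}$ is the open neighborhood of $v$, and for $S\subseteq V$, $N(S)=\bigcup_{v\in S}N(v)$. For $U\subseteq V$, $X_U=\prod_{v\in U}v\in A[V]$. For $D\subseteq V$, $(D)R$ denotes the ideal generated by the variables in $D$. A set $D\subseteq V$ is a total dominating set (TD-set) of $G$ if $N(D)=V$; it is a minimal TD-set if no proper subset of $D$ is a TD-set. *)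

theory Defs
  imports Main "HOL-Library.Poly_Mapping"
begin

text \<open>A finite simple graph G = (V,E): the vertex set is the finite type 'v (V = UNIV),
  edges are given by a symmetric irreflexive relation E.\<close>

definition simple_graph :: "('v \<Rightarrow> 'v \<Rightarrow> bool) \<Rightarrow> bool" where
  "simple_graph E \<longleftrightarrow> (\<forall>u v. E u v \<longrightarrow> E v u) \<and> (\<forall>v. \<not> E v v)"

definition open_nbhd :: "('v \<Rightarrow> 'v \<Rightarrow> bool) \<Rightarrow> 'v \<Rightarrow> 'v set" where
  "open_nbhd E v = {u. E u v}"

definition open_nbhd_set :: "('v \<Rightarrow> 'v \<Rightarrow> bool) \<Rightarrow> 'v set \<Rightarrow> 'v set" where
  "open_nbhd_set E S = (\<Union>v\<in>S. open_nbhd E v)"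

definition total_dominating :: "('v \<Rightarrow> 'v \<Rightarrow> bool) \<Rightarrow> 'v set \<Rightarrow> bool" where
  "total_dominating E D \<longleftrightarrow> open_nbhd_set E D = UNIV"

definition minimal_total_dominating :: "('v \<Rightarrow> 'v \<Rightarrow> bool) \<Rightarrow> 'v set \<Rightarrow> bool" where
  "minimal_total_dominating E D \<longleftrightarrow>
     total_dominating E D \<and> (\<forall>D'. D' \<subset> D \<longrightarrow> \<not> total_dominating E D')"

type_synonym ('v, 'a) mpoly = "('v \<Rightarrow>\<^sub>0 nat) \<Rightarrow>\<^sub>0 'a"

definition pvar :: "'v \<Rightarrow> ('v, 'a::comm_ring_1) mpoly" where
  "pvar v = Poly_Mapping.single (Poly_Mapping.single v 1) 1"

definition monom_prod :: "'v set \<Rightarrow> ('v, 'a::comm_ring_1) mpoly" where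
  "monom_prod U = (\<Prod>v\<in>U. pvar v)"

definition ideal_gen :: "'r::comm_ring_1 set \<Rightarrow> 'r set" where
  "ideal_gen S = {(\<Sum>g\<in>F. r g * g) | F r. finite F \<and> F \<subseteq> S}"

definition open_nbhd_ideal :: "('v \<Rightarrow> 'v \<Rightarrow> bool) \<Rightarrow> ('v, 'a::comm_ring_1) mpoly set" where
  "open_nbhd_ideal E = ideal_gen {monom_prod (open_nbhd E v) | v. True}"

end

theory Submission
  imports Defs
begin

lemma ig_gen: "g \<in> S \<Longrightarrow> g \<in> ideal_gen S"
  unfolding ideal_gen_def
  by (rule CollectI, rule exI[of _ "{g}"], rule exI[of _ "\<lambda>_. 1"]) simp

lemma ig_0: "0 \<in> ideal_gen S"
  unfolding ideal_gen_def
  by (rule CollectI, rule exI[of _ "{}"]) simp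

lemma ig_mult: "a \<in> ideal_gen S \<Longrightarrow> c * a \<in> ideal_gen S"
proof -
  assume "a \<in> ideal_gen S"
  then obtain F r where F: "finite F" "F \<subseteq> S" and a: "a = (\<Sum>g\<in>F. r g * g)"
    unfolding ideal_gen_def by blast
  have "c * a = (\<Sum>g\<in>F. (c * r g) * g)" unfolding a
    by (simp add: sum_distrib_left mult.assoc)
  then show ?thesis unfolding ideal_gen_def using F
    by (intro CollectI exI[of _ F] exI[of _ "\<lambda>g. c * r g"]) auto
qed

lemma ig_add: "a \<in> ideal_gen S \<Longrightarrow> b \<in> ideal_gen S \<Longrightarrow> a + b \<in> ideal_gen S"
proof -
  assume "a \<in> ideal_gen S" "b \<in> ideal_gen S"
  then obtain F1 r1 F2 r2 where F: "finite F1" "F1 \<subseteq> S" "finite F2" "F2 \<subseteq> S"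
    and a: "a = (\<Sum>g\<in>F1. r1 g * g)" and b: "b = (\<Sum>g\<in>F2. r2 g * g)"
    unfolding ideal_gen_def by blast
  define r where "r g = (if g \<in> F1 then r1 g else 0) + (if g \<in> F2 then r2 g else 0)" for g
  have "(\<Sum>g\<in>F1 \<union> F2. r g * g) = (\<Sum>g\<in>F1 \<union> F2. (if g \<in> F1 then r1 g * g else 0))
       + (\<Sum>g\<in>F1 \<union> F2. (if g \<in> F2 then r2 g * g else 0))"
    unfolding sum.distrib[symmetric] by (rule sum.cong) (auto simp: r_def distrib_right)
  also have "\<dots> = a + b" unfolding a b using F
    by (simp add: sum.inter_restrict[symmetric] Int_absorb1 inf_commute)
  finally show ?thesis unfolding ideal_gen_def using F
    by (intro CollectI exI[of _ "F1 \<union> F2"] exI[of _ r]) auto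
qed

lemma ig_sum: "finite I \<Longrightarrow> (\<And>i. i \<in> I \<Longrightarrow> f i \<in> ideal_gen S) \<Longrightarrow> sum f I \<in> ideal_gen S"
  by (induction I rule: finite_induct) (auto intro: ig_0 ig_add)

lemma ig_sub: "S \<subseteq> ideal_gen T \<Longrightarrow> ideal_gen S \<subseteq> ideal_gen T"
proof
  fix x assume S: "S \<subseteq> ideal_gen T" and "x \<in> ideal_gen S"
  then obtain F r where F: "finite F" "F \<subseteq> S" and a: "x = (\<Sum>g\<in>F. r g * g)"
    unfolding ideal_gen_def by blast
  show "x \<in> ideal_gen T" unfolding a
    by (rule ig_sum[OF F(1)]) (use F S in \<open>auto intro: ig_mult\<close>)
qed

lemma ig_mono: "S \<subseteq> T \<Longrightarrow> ideal_gen S \<subseteq> ideal_gen T"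
  by (rule ig_sub) (auto intro: ig_gen)

definition mexp :: "'v set \<Rightarrow> 'v \<Rightarrow>\<^sub>0 nat" where
  "mexp U = (\<Sum>u\<in>U. Poly_Mapping.single u 1)"

lemma lookup_mexp: "finite U \<Longrightarrow> Poly_Mapping.lookup (mexp U) w = (if w \<in> U then 1 else 0)"
  unfolding mexp_def by (simp add: Poly_Mapping.lookup_sum lookup_single when_def)

lemma monom_prod_eq: "finite U \<Longrightarrow> (monom_prod U :: ('v,'a::comm_ring_1) mpoly) = Poly_Mapping.single (mexp U) 1"
proof (induction U rule: finite_induct)
  case empty
  then show ?case by (simp add: monom_prod_def mexp_def)
next
  case (insert x F)
  then show ?case
    by (simp add: monom_prod_def mexp_def pvar_def mult_single)
qed

lemma expansion: "f = (\<Sum>m\<in>Poly_Mapping.keys f. Poly_Mapping.single m (Poly_Mapping.lookup f m))"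
  by (rule poly_mapping_eqI) (auto simp: Poly_Mapping.lookup_sum lookup_single when_def in_keys_iff)

lemma nec:
  assumes "(f :: ('v,'a::comm_ring_1) mpoly) \<in> ideal_gen (pvar ` D)" "m \<in> Poly_Mapping.keys f"
  shows "\<exists>d\<in>D. Poly_Mapping.lookup m d > 0"
proof -
  obtain F r where F: "finite F" "F \<subseteq> pvar ` D" and a: "f = (\<Sum>g\<in>F. r g * g)"
    using assms(1) unfolding ideal_gen_def by blast
  from assms(2) keys_sum[of "\<lambda>g. r g * g" F] obtain g where g: "g \<in> F" "m \<in> Poly_Mapping.keys (r g * g)"
    unfolding a by blast
  then obtain d where d: "d \<in> D" "g = pvar d" using F by blast
  have "Poly_Mapping.keys (g :: ('v,'a) mpoly) = {Poly_Mapping.single d 1}" unfolding d pvar_def by simp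
  with g keys_mult[of "r g" g] obtain a where "m = a + Poly_Mapping.single d 1" by auto
  then have "Poly_Mapping.lookup m d > 0" by (simp add: lookup_add)
  with d show ?thesis by blast
qed

lemma suf:
  assumes fin: "\<And>U::'v set. finite U"
  assumes "\<forall>m\<in>Poly_Mapping.keys f. \<exists>v. open_nbhd E v \<subseteq> {u. Poly_Mapping.lookup m u > 0}"
  shows "(f :: ('v,'a::comm_ring_1) mpoly) \<in> open_nbhd_ideal E"
proof -
  have "Poly_Mapping.single m (Poly_Mapping.lookup f m) \<in> open_nbhd_ideal E" if m: "m \<in> Poly_Mapping.keys f" for m
  proof -
    obtain v where v: "open_nbhd E v \<subseteq> {u. Poly_Mapping.lookup m u > 0}" using assms(2) m by blast
    define U where "U = open_nbhd E v"
    have eq: "m - mexp U + mexp U = m"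
      by (rule poly_mapping_eqI) (use v in \<open>auto simp: lookup_add lookup_minus lookup_mexp fin U_def\<close>)
    have "Poly_Mapping.single m (Poly_Mapping.lookup f m) = Poly_Mapping.single (m - mexp U) (Poly_Mapping.lookup f m) * (monom_prod U :: ('v,'a) mpoly)"
      by (simp add: monom_prod_eq fin mult_single eq)
    moreover have "(monom_prod U :: ('v,'a) mpoly) \<in> open_nbhd_ideal E"
      unfolding open_nbhd_ideal_def U_def by (rule ig_gen) blast
    ultimately show ?thesis unfolding open_nbhd_ideal_def by (simp add: ig_mult)
  qed
  then show ?thesis
    unfolding open_nbhd_ideal_def by (subst expansion) (rule ig_sum, auto)
qed

lemma exists_minimal:
  "finite D \<Longrightarrow> total_dominating E D \<Longrightarrow> \<exists>D'\<subseteq>D. minimal_total_dominating E D'"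
proof (induction D rule: finite_psubset_induct)
  case (psubset A)
  show ?case
  proof (cases "minimal_total_dominating E A")
    case True then show ?thesis by (intro exI[of _ A]) simp
  next
    case False
    then obtain D' where "D' \<subset> A" "total_dominating E D'"
      using psubset.prems unfolding minimal_total_dominating_def by auto
    then obtain D'' where "D'' \<subseteq> D'" "minimal_total_dominating E D''"
      using psubset.IH by blast
    then show ?thesis using \<open>D' \<subset> A\<close> by (intro exI[of _ D'']) auto
  qed
qed

lemma partA:
  fixes E :: "'v::finite \<Rightarrow> 'v \<Rightarrow> bool"
  assumes sg: "simple_graph E" and td: "total_dominating E D"
  shows "(open_nbhd_ideal E :: ('v,'a::comm_ring_1) mpoly set) \<subseteq> ideal_gen (pvar ` D)"
  unfolding open_nbhd_ideal_def
proof (rule ig_sub, safe)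
  fix v
  have "v \<in> open_nbhd_set E D" using td unfolding total_dominating_def by simp
  then obtain d where d: "d \<in> D" "E v d" unfolding open_nbhd_set_def open_nbhd_def by blast
  then have "d \<in> open_nbhd E v" using sg unfolding simple_graph_def open_nbhd_def by blast
  then have "(monom_prod (open_nbhd E v) :: ('v,'a) mpoly) = pvar d * monom_prod (open_nbhd E v - {d})"
    unfolding monom_prod_def by (simp add: prod.remove)
  also have "\<dots> \<in> ideal_gen (pvar ` D)"
    by (subst mult.commute, rule ig_mult, rule ig_gen) (use d in blast)
  finally show "(monom_prod (open_nbhd E v) :: ('v,'a) mpoly) \<in> ideal_gen (pvar ` D)" .
qed

lemma partB:
  fixes E :: "'v::finite \<Rightarrow> 'v \<Rightarrow> bool"
  assumes sg: "simple_graph E"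
    and f: "\<And>D. total_dominating E D \<Longrightarrow> (f :: ('v,'a::comm_ring_1) mpoly) \<in> ideal_gen (pvar ` D)"
  shows "f \<in> open_nbhd_ideal E"
proof (rule suf)
  show "finite U" for U :: "'v set" by simp
  show "\<forall>m\<in>Poly_Mapping.keys f. \<exists>v. open_nbhd E v \<subseteq> {u. Poly_Mapping.lookup m u > 0}"
  proof
  fix m assume m: "m \<in> Poly_Mapping.keys f"
  show "\<exists>v. open_nbhd E v \<subseteq> {u. Poly_Mapping.lookup m u > 0}"
  proof (rule ccontr)
    assume H: "\<not> ?thesis"
    define D where "D = {u. Poly_Mapping.lookup m u = 0}"
    have "total_dominating E D"
    proof -
      have "v \<in> open_nbhd_set E D" for v
      proof -
        from H have "\<not> open_nbhd E v \<subseteq> {u. Poly_Mapping.lookup m u > 0}" by blast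
        then obtain u where "u \<in> open_nbhd E v" "\<not> Poly_Mapping.lookup m u > 0" by blast
        then show "v \<in> open_nbhd_set E D"
          using sg unfolding open_nbhd_set_def open_nbhd_def D_def simple_graph_def by auto
      qed
      then show ?thesis unfolding total_dominating_def by auto
    qed
    from nec[OF f[OF this] m] show False unfolding D_def by auto
  qed
  qed
qed

lemma min_sub:
  fixes E :: "'v::finite \<Rightarrow> 'v \<Rightarrow> bool"
  shows "\<Inter> {ideal_gen (pvar ` D) | D. minimal_total_dominating E D} \<subseteq> (\<Inter> {ideal_gen (pvar ` D) | D. total_dominating E D} :: ('v,'a::comm_ring_1) mpoly set)"
    proof
  fix f :: "('v,'a) mpoly"
  assume f: "f \<in> \<Inter> {ideal_gen (pvar ` D) | D. minimal_total_dominating E D}"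
  show "f \<in> \<Inter> {ideal_gen (pvar ` D) | D. total_dominating E D}"
  proof (rule InterI)
    fix X :: "('v,'a) mpoly set" assume "X \<in> {ideal_gen (pvar ` D) | D. total_dominating E D}"
    then obtain D where X: "X = ideal_gen (pvar ` D)" and td: "total_dominating E D" by auto
    obtain D' where D': "D' \<subseteq> D" "minimal_total_dominating E D'" using exists_minimal[OF finite_class.finite td] by blast
    then have "ideal_gen (pvar ` D') \<in> {ideal_gen (pvar ` D) | D. minimal_total_dominating E D}"
      by (intro CollectI exI[of _ D'] conjI refl)
    then have "f \<in> ideal_gen (pvar ` D')" using f by (rule InterD[rotated])
    moreover have "ideal_gen (pvar ` D') \<subseteq> ideal_gen (pvar ` D)"
      by (rule ig_mono) (rule image_mono[OF D'(1)])
    ultimately show "f \<in> X" unfolding X by (rule subsetD[rotated])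
  qed
qed

theorem theorem2p10:
  fixes E :: "'v::finite \<Rightarrow> 'v \<Rightarrow> bool"
  assumes "simple_graph E"
  shows "(open_nbhd_ideal E :: ('v, 'a::comm_ring_1) mpoly set)
           = \<Inter> {ideal_gen (pvar ` D) | D. total_dominating E D}
       \<and> (open_nbhd_ideal E :: ('v, 'a) mpoly set)
           = \<Inter> {ideal_gen (pvar ` D) | D. minimal_total_dominating E D}
       \<and> (\<forall>D0. minimal_total_dominating E D0 \<longrightarrow>
           \<Inter> {ideal_gen (pvar ` D) | D. minimal_total_dominating E D \<and> D \<noteq> D0}
             \<noteq> (open_nbhd_ideal E :: ('v, 'a) mpoly set))"
proof (intro conjI allI impI)
  have A: "(open_nbhd_ideal E :: ('v, 'a) mpoly set) \<subseteq> ideal_gen (pvar ` D)"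
    if "total_dominating E D" for D using partA[OF assms that] .
  show 1: "(open_nbhd_ideal E :: ('v, 'a) mpoly set)
           = \<Inter> {ideal_gen (pvar ` D) | D. total_dominating E D}"
  proof
    show "(open_nbhd_ideal E :: ('v, 'a) mpoly set) \<subseteq> \<Inter> {ideal_gen (pvar ` D) | D. total_dominating E D}"
    proof (rule Inter_greatest)
      fix X :: "('v,'a) mpoly set" assume "X \<in> {ideal_gen (pvar ` D) | D. total_dominating E D}"
      then obtain D where X: "X = ideal_gen (pvar ` D)" and td: "total_dominating E D" by auto
      show "open_nbhd_ideal E \<subseteq> X" unfolding X by (rule A[OF td])
    qed
    show "\<Inter> {ideal_gen (pvar ` D) | D. total_dominating E D} \<subseteq> (open_nbhd_ideal E :: ('v, 'a) mpoly set)"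
    proof
      fix f :: "('v,'a) mpoly" assume f: "f \<in> \<Inter> {ideal_gen (pvar ` D) | D. total_dominating E D}"
      show "f \<in> open_nbhd_ideal E"
      proof (rule partB[OF assms])
        fix D assume "total_dominating E D"
        then have "ideal_gen (pvar ` D) \<in> {ideal_gen (pvar ` D) | D. total_dominating E D}" by auto
        then show "f \<in> ideal_gen (pvar ` D)" using f by (rule InterD[rotated])
      qed
    qed
  qed
  show "(open_nbhd_ideal E :: ('v, 'a) mpoly set)
           = \<Inter> {ideal_gen (pvar ` D) | D. minimal_total_dominating E D}"
  proof
    show "(open_nbhd_ideal E :: ('v, 'a) mpoly set) \<subseteq> \<Inter> {ideal_gen (pvar ` D) | D. minimal_total_dominating E D}"
    proof (rule Inter_greatest)
      fix X :: "('v,'a) mpoly set" assume "X \<in> {ideal_gen (pvar ` D) | D. minimal_total_dominating E D}"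
      then obtain D where X: "X = ideal_gen (pvar ` D)" and td: "minimal_total_dominating E D" by auto
      show "open_nbhd_ideal E \<subseteq> X" unfolding X
        by (rule A) (use td in \<open>simp add: minimal_total_dominating_def\<close>)
    qed
    have "\<Inter> {ideal_gen (pvar ` D) | D. minimal_total_dominating E D} \<subseteq> (\<Inter> {ideal_gen (pvar ` D) | D. total_dominating E D} :: ('v,'a) mpoly set)"
      by (rule min_sub)
    then show "\<Inter> {ideal_gen (pvar ` D) | D. minimal_total_dominating E D} \<subseteq> (open_nbhd_ideal E :: ('v, 'a) mpoly set)"
      by (simp only: 1)
  qed
  fix D0 assume D0: "minimal_total_dominating E D0"
  define f :: "('v,'a) mpoly" where "f = monom_prod (UNIV - D0)"
  have "f \<in> \<Inter> {ideal_gen (pvar ` D) | D. minimal_total_dominating E D \<and> D \<noteq> D0}"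
  proof (rule InterI)
    fix X :: "('v,'a) mpoly set" assume "X \<in> {ideal_gen (pvar ` D) | D. minimal_total_dominating E D \<and> D \<noteq> D0}"
    then obtain D where X: "X = ideal_gen (pvar ` D)" and D: "minimal_total_dominating E D" "D \<noteq> D0" by auto
    have "\<not> D \<subset> D0" using D(1) D0 unfolding minimal_total_dominating_def by auto
    then have "\<not> D \<subseteq> D0" using D(2) by auto
    then obtain d where d: "d \<in> D" "d \<notin> D0" by blast
    then have "f = pvar d * monom_prod (UNIV - D0 - {d})"
      unfolding f_def monom_prod_def by (simp add: prod.remove)
    also have "\<dots> \<in> ideal_gen (pvar ` D)"
      by (subst mult.commute, rule ig_mult, rule ig_gen) (use d in blast)
    finally show "f \<in> X" unfolding X .
  qed
  moreover have "f \<notin> open_nbhd_ideal E"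
  proof
    assume "f \<in> open_nbhd_ideal E"
    moreover have "total_dominating E D0" using D0 unfolding minimal_total_dominating_def by simp
    ultimately have fi: "f \<in> ideal_gen (pvar ` D0)" using A by blast
    have "mexp (UNIV - D0) \<in> Poly_Mapping.keys f" unfolding f_def by (simp add: monom_prod_eq)
    from nec[OF fi this] show False by (auto simp: lookup_mexp)
  qed
  ultimately show "\<Inter> {ideal_gen (pvar ` D) | D. minimal_total_dominating E D \<and> D \<noteq> D0}
             \<noteq> (open_nbhd_ideal E :: ('v, 'a) mpoly set)" by metis
qed

end
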